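(* Let $q$ be an odd prime power, $f$ a planar function on $\mathbb F_{q^2}$, and $\theta\in\mathbb F_{q^2}^*$ such that for every $c\in\mathbb F_q$, $\#\{x\in\mathbb F_{q^2}:\phi(x)=c\}$ equals $q+1$ if $c\neq0$ and $1$ if $c=0$, where $\phi(x):=\theta_1f_0(x)-\theta_0f_1(x)$. Let $\mathscr C_\theta:=\{C_{a,\beta}:a\in\mathbb F_{q^2},\beta\in\mathbb F_q^*\}$ with $C_{a,\beta}:=\{x\in\mathbb F_{q^2}:\phi(x+a)=\beta\}$. Then $(\mathbb F_{q^2},\mathscr C_\theta)$ is a $(q^2,q+1,q)$-design, i.e.\ every element of $\mathscr C_\theta$ has $q+1$ elements and any two distinct elements of $\mathbb F_{q^2}$ lie in exactly $q$ members of $\mathscr C_\theta$.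
   Context: A function $f:\mathbb F_{q^2}\to\mathbb F_{q^2}$ is planar if for every $a\neq0$ the map $x\mapsto f(x+a)-f(x)$ is a bijection. A fixed $\xi\in\mathbb F_{q^2}\setminus\mathbb F_q$ is chosen; $\theta=\theta_0+\theta_1\xi$ and $f(x)=f_0(x)+f_1(x)\xi$ with $\theta_i\in\mathbb F_q$, $f_i(x)\in\mathbb F_q$. *)

theory Defs
  imports "HOL-Computational_Algebra.Primes" "HOL-Library.Cardinality"
begin

definition prime_power_nat :: "nat \<Rightarrow> bool" where
  "prime_power_nat q \<longleftrightarrow> (\<exists>p k. prime p \<and> k \<ge> 1 \<and> q = p ^ k)"

(* the subfield F_q of a field with q^2 elements: the fixed points of x \<mapsto> x^q *)
definition subfield_q :: "nat \<Rightarrow> 'a::field set" where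
  "subfield_q q = {x. x ^ q = x}"

definition planar :: "('a::field \<Rightarrow> 'a) \<Rightarrow> bool" where
  "planar f \<longleftrightarrow> (\<forall>a. a \<noteq> 0 \<longrightarrow> bij (\<lambda>x. f (x + a) - f x))"

definition block :: "('a::field \<Rightarrow> 'a) \<Rightarrow> 'a \<Rightarrow> 'a \<Rightarrow> 'a set" where
  "block phi a \<beta> = {x. phi (x + a) = \<beta>}"

end

theory Submission
  imports Defs "HOL-Number_Theory.Residues" "HOL-Computational_Algebra.Polynomial"
begin

lemma power_card_same:
  fixes x :: "'a::{field,finite}"
  shows "x ^ CARD('a) = x"
proof (cases "x = 0")
  case False
  have "x * (\<Prod>y\<in>UNIV-{0}. x * y) = x * x ^ (card (UNIV :: 'a set) - 1) * \<Prod>(UNIV-{0})"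
    by (simp add: prod.distrib mult_ac)
  also have "x * x ^ (card (UNIV :: 'a set) - 1) = x ^ Suc (card (UNIV :: 'a set) - 1)"
    by (subst power_Suc) auto
  also have "Suc (card (UNIV :: 'a set) - 1) = card (UNIV :: 'a set)"
    using finite_UNIV_card_ge_0[where ?'a = 'a] by simp
  also have "(\<Prod>y\<in>UNIV-{0}. x * y) = (\<Prod>y\<in>UNIV-{0}. y)"
    by (rule prod.reindex_bij_witness[of _ "\<lambda>y. y / x" "\<lambda>y. x * y"]) (use False in auto)
  finally show ?thesis
    by simp
qed (use finite_UNIV_card_ge_0[where ?'a = 'a] in auto)

lemma root_bound:
  fixes c a :: "'a::field"
  assumes "n \<ge> 2"
  shows "card {x. x ^ n + a * x = c} \<le> n"
proof -
  let ?p = "monom 1 n + [:-c, a:]"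
  have d1: "degree [:-c, a:] < n" using assms by (auto simp: degree_pCons_eq_if)
  have deg: "degree ?p = n"
    by (subst degree_add_eq_left) (use assms d1 in \<open>auto simp: degree_monom_eq\<close>)
  have "?p \<noteq> 0" using deg assms by auto
  have "{x. x ^ n + a * x = c} = {x. poly ?p x = 0}"
    by (auto simp: poly_monom algebra_simps)
  also have "card \<dots> \<le> n" using card_poly_roots_bound[OF \<open>?p \<noteq> 0\<close>] deg by simp
  finally show ?thesis .
qed

theorem corollary3p6:
  fixes q :: nat
    and f f0 f1 :: "'a::{field,finite} \<Rightarrow> 'a"
    and \<theta> \<theta>0 \<theta>1 \<xi> :: 'a
  assumes q_pp: "prime_power_nat q" and q_odd: "odd q"
    and card: "CARD('a) = q ^ 2"
    and xi: "\<xi> \<notin> subfield_q q"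
    and f_dec: "\<forall>x. f0 x \<in> subfield_q q \<and> f1 x \<in> subfield_q q \<and> f x = f0 x + f1 x * \<xi>"
    and th_dec: "\<theta>0 \<in> subfield_q q" "\<theta>1 \<in> subfield_q q" "\<theta> = \<theta>0 + \<theta>1 * \<xi>"
    and th_nz: "\<theta> \<noteq> 0"
    and f_planar: "planar f"
    and level: "\<forall>c \<in> subfield_q q.
        card {x. \<theta>1 * f0 x - \<theta>0 * f1 x = c} = (if c \<noteq> 0 then q + 1 else 1)"
  shows "(\<forall>B \<in> {block (\<lambda>x. \<theta>1 * f0 x - \<theta>0 * f1 x) a \<beta> | a \<beta>.
              \<beta> \<in> subfield_q q \<and> \<beta> \<noteq> 0}. card B = q + 1)
       \<and> (\<forall>x y. x \<noteq> y \<longrightarrow>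
            card {B \<in> {block (\<lambda>x. \<theta>1 * f0 x - \<theta>0 * f1 x) a \<beta> | a \<beta>.
                        \<beta> \<in> subfield_q q \<and> \<beta> \<noteq> 0}. x \<in> B \<and> y \<in> B} = q)"
proof -
  define K :: "'a set" where "K = subfield_q q"
  have K_iff: "x \<in> K \<longleftrightarrow> x ^ q = x" for x unfolding K_def subfield_q_def by simp
  obtain p k where p: "prime p" "k \<ge> 1" "q = p ^ k"
    using q_pp unfolding prime_power_nat_def by blast
  have q2: "q \<ge> 2"
  proof -
    have "p ^ 1 \<le> p ^ k" by (rule power_increasing) (use p(2) prime_gt_0_nat[OF p(1)] in auto)
    thus ?thesis using p(3) prime_ge_2_nat[OF p(1)] by simp
  qed
  have charpos: "CHAR('a) > 0" by (rule finite_imp_CHAR_pos) simp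
  have charprime: "prime CHAR('a)" using prime_CHAR_semidom charpos by blast
  have "CHAR('a) dvd p ^ (k * 2)"
    using CHAR_dvd_CARD[where 'a='a] card p(3) by (simp add: power_mult)
  hence "CHAR('a) dvd p" using charprime prime_dvd_power by blast
  hence charp: "CHAR('a) = p" using charprime p(1) primes_dvd_imp_eq by blast
  have frob: "(x + y) ^ q = x ^ q + y ^ q" for x y :: 'a
    by (rule freshmans_dream'[OF charprime]) (simp add: charp p(3))
  have Kadd: "x + y \<in> K" if "x \<in> K" "y \<in> K" for x y
    using that by (simp add: K_iff frob)
  have Kneg: "- x \<in> K" if "x \<in> K" for x
    using that q_odd by (simp add: K_iff)
  have Kdiff: "x - y \<in> K" if "x \<in> K" "y \<in> K" for x y
    using Kadd[OF that(1) Kneg[OF that(2)]] by simp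
  have Kmult: "x * y \<in> K" if "x \<in> K" "y \<in> K" for x y
    using that by (simp add: K_iff power_mult_distrib)
  have Kdiv: "x / y \<in> K" if "x \<in> K" "y \<in> K" for x y
    using that by (simp add: K_iff power_divide)
  have K0: "0 \<in> K" using q2 by (simp add: K_iff)
  have cardK_le: "card K \<le> q"
  proof -
    have "K = {x. x ^ q + (-1) * x = 0}" by (auto simp: K_iff)
    thus ?thesis using root_bound[OF q2, of "-1" 0] by simp
  qed
  have qq: "x ^ (q * q) = x" for x :: 'a
    using power_card_same[of x] card by (simp add: power2_eq_square)
  define T where "T x = x + x ^ q" for x :: 'a
  have TK: "T x \<in> K" for x
    unfolding T_def K_iff frob by (simp add: qq flip: power_mult)
  have cardK_ge: "q \<le> card K"
  proof -
    have "(UNIV :: 'a set) = (\<Union>c\<in>K. {x. T x = c})" using TK by auto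
    hence "q * q = card (\<Union>c\<in>K. {x. T x = c})" using card by (simp add: power2_eq_square)
    also have "\<dots> \<le> (\<Sum>c\<in>K. card {x. T x = c})" by (rule card_UN_le) simp
    also have "\<dots> \<le> card K * q"
    proof -
      have "card {x. T x = c} \<le> q" if "c \<in> K" for c
      proof -
        have "{x. T x = c} = {x. x ^ q + 1 * x = c}" by (auto simp: T_def)
        thus "card {x. T x = c} \<le> q" using root_bound[OF q2, of 1 c] by simp
      qed
      thus ?thesis using sum_bounded_above[of K "\<lambda>c. card {x. T x = c}" q] by simp
    qed
    finally show ?thesis using q2 by simp
  qed
  have cardK: "card K = q" using cardK_le cardK_ge by simp
  define phi where "phi x = \<theta>1 * f0 x - \<theta>0 * f1 x" for x
  have phi_eq: "(\<lambda>x. \<theta>1 * f0 x - \<theta>0 * f1 x) = phi" by (simp add: phi_def fun_eq_iff)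
  have phiK: "phi x \<in> K" for x
    using f_dec th_dec Kdiff Kmult unfolding phi_def K_def by auto
  have levelK: "card {x. phi x = c} = (if c \<noteq> 0 then q + 1 else 1)" if "c \<in> K" for c
    using level that unfolding phi_def K_def by auto
  define D :: "'a \<times> 'a \<Rightarrow> 'a" where "D = (\<lambda>(a, b). a + b * \<xi>)"
  have Dinj: "inj_on D (K \<times> K)"
  proof (rule inj_onI)
    fix u v assume u: "u \<in> K \<times> K" and v: "v \<in> K \<times> K" and e: "D u = D v"
    obtain a b a' b' where uv: "u = (a, b)" "v = (a', b')" by (cases u, cases v)
    show "u = v"
    proof (cases "b = b'")
      case True with e uv show ?thesis by (auto simp: D_def)
    next
      case False
      have "(b - b') * \<xi> = a' - a" using e uv by (auto simp: D_def algebra_simps)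
      hence "\<xi> = (a' - a) / (b - b')" using False by (auto simp: field_simps)
      moreover have "(a' - a) / (b - b') \<in> K" using u v uv Kdiff Kdiv by auto
      ultimately show ?thesis using xi K_def by auto
    qed
  qed
  have th01: "\<theta>0 \<noteq> 0 \<or> \<theta>1 \<noteq> 0" using th_nz th_dec by auto
  define P where "P \<gamma> = {(a, b). a \<in> K \<and> b \<in> K \<and> \<theta>1 * a - \<theta>0 * b = \<gamma>}" for \<gamma>
  have PK: "P \<gamma> \<subseteq> K \<times> K" for \<gamma> by (auto simp: P_def)
  have Ple: "card (P \<gamma>) \<le> q" for \<gamma>
  proof (cases "\<theta>1 = 0")
    case True hence t0: "\<theta>0 \<noteq> 0" using th01 by simp
    have "inj_on fst (P \<gamma>)"
    proof (rule inj_onI)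
      fix u v assume "u \<in> P \<gamma>" "v \<in> P \<gamma>" "fst u = fst v"
      thus "u = v" using True t0 by (auto simp: P_def)
    qed
    hence "card (P \<gamma>) = card (fst ` P \<gamma>)" by (rule card_image[symmetric])
    also have "\<dots> \<le> card K" by (rule card_mono) (auto simp: P_def)
    finally show ?thesis using cardK by simp
  next
    case False
    have "inj_on snd (P \<gamma>)"
    proof (rule inj_onI)
      fix u v assume "u \<in> P \<gamma>" "v \<in> P \<gamma>" "snd u = snd v"
      thus "u = v" using False by (auto simp: P_def)
    qed
    hence "card (P \<gamma>) = card (snd ` P \<gamma>)" by (rule card_image[symmetric])
    also have "\<dots> \<le> card K" by (rule card_mono) (auto simp: P_def)
    finally show ?thesis using cardK by simp
  qed
  have Pge: "q \<le> card (P 0)"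
  proof (cases "\<theta>1 = 0")
    case True
    have "(\<lambda>a. (a, 0::'a)) ` K \<subseteq> P 0" using True K0 by (auto simp: P_def)
    hence "card ((\<lambda>a. (a, 0::'a)) ` K) \<le> card (P 0)" by (simp add: card_mono)
    moreover have "card ((\<lambda>a. (a, 0::'a)) ` K) = card K" by (rule card_image) (auto simp: inj_on_def)
    ultimately show ?thesis using cardK by simp
  next
    case False
    have "(\<lambda>b. (\<theta>0 * b / \<theta>1, b)) ` K \<subseteq> P 0"
    proof
      fix z assume "z \<in> (\<lambda>b. (\<theta>0 * b / \<theta>1, b)) ` K"
      then obtain b where b: "b \<in> K" "z = (\<theta>0 * b / \<theta>1, b)" by auto
      have t0: "\<theta>0 \<in> K" "\<theta>1 \<in> K" using th_dec K_def by auto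
      have "\<theta>0 * b / \<theta>1 \<in> K" using Kdiv[OF Kmult[OF t0(1) b(1)] t0(2)] .
      moreover have "\<theta>1 * (\<theta>0 * b / \<theta>1) - \<theta>0 * b = 0" using False by simp
      ultimately show "z \<in> P 0" using b by (simp add: P_def)
    qed
    hence "card ((\<lambda>b. (\<theta>0 * b / \<theta>1, b)) ` K) \<le> card (P 0)" by (simp add: card_mono)
    moreover have "card ((\<lambda>b. (\<theta>0 * b / \<theta>1, b)) ` K) = card K" by (rule card_image) (auto simp: inj_on_def)
    ultimately show ?thesis using cardK by simp
  qed
  have A: "card {u. phi (u + d) - phi u = \<gamma>} \<le> q \<and> card {u. phi (u + d) = phi u} = q"
    if "d \<noteq> 0" for d \<gamma>
  proof -
    define \<Delta> where "\<Delta> u = f (u + d) - f u" for u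
    have bij: "bij \<Delta>" using f_planar that unfolding planar_def \<Delta>_def by auto
    define g0 where "g0 u = f0 (u + d) - f0 u" for u
    define g1 where "g1 u = f1 (u + d) - f1 u" for u
    have gK: "g0 u \<in> K" "g1 u \<in> K" for u using f_dec Kdiff unfolding g0_def g1_def K_def by auto
    have \<Delta>eq: "\<Delta> u = D (g0 u, g1 u)" for u
      using f_dec unfolding \<Delta>_def D_def g0_def g1_def by (simp add: algebra_simps)
    have phid: "phi (u + d) - phi u = \<theta>1 * g0 u - \<theta>0 * g1 u" for u
      by (simp add: phi_def g0_def g1_def algebra_simps)
    have sub: "{u. phi (u + d) - phi u = \<gamma>} \<subseteq> \<Delta> -` (D ` P \<gamma>)" for \<gamma>
    proof
      fix u assume "u \<in> {u. phi (u + d) - phi u = \<gamma>}"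
      hence "(g0 u, g1 u) \<in> P \<gamma>" using phid gK by (auto simp: P_def)
      thus "u \<in> \<Delta> -` (D ` P \<gamma>)" using \<Delta>eq by auto
    qed
    have cv: "card (\<Delta> -` (D ` P \<gamma>)) = card (P \<gamma>)" for \<gamma>
    proof -
      have "card (\<Delta> -` (D ` P \<gamma>)) = card (D ` P \<gamma>)"
        using bij by (intro card_vimage_inj) (auto simp: bij_def)
      also have "\<dots> = card (P \<gamma>)" using inj_on_subset[OF Dinj PK] by (rule card_image)
      finally show ?thesis .
    qed
    have 1: "card {u. phi (u + d) - phi u = \<gamma>} \<le> card (\<Delta> -` (D ` P \<gamma>))"
      by (rule card_mono) (simp_all add: sub)
    have eq: "{u. phi (u + d) = phi u} = \<Delta> -` (D ` P 0)"
    proof (rule equalityI)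
      show "{u. phi (u + d) = phi u} \<subseteq> \<Delta> -` (D ` P 0)" using sub[of 0] by auto
      show "\<Delta> -` (D ` P 0) \<subseteq> {u. phi (u + d) = phi u}"
      proof
        fix u assume "u \<in> \<Delta> -` (D ` P 0)"
        then obtain w where w: "w \<in> P 0" "\<Delta> u = D w" by auto
        have "(g0 u, g1 u) = w"
          using w PK gK \<Delta>eq by (intro inj_onD[OF Dinj]) auto
        with w(1) phid[of u] show "u \<in> {u. phi (u + d) = phi u}" by (auto simp: P_def)
      qed
    qed
    have "card {u. phi (u + d) = phi u} = q" using eq cv[of 0] Ple[of 0] Pge by simp
    with 1 cv Ple show ?thesis by (metis le_trans)
  qed
  have block_card: "card (block phi a \<beta>) = q + 1" if "\<beta> \<in> K" "\<beta> \<noteq> 0" for a \<beta>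
  proof -
    have "block phi a \<beta> = (\<lambda>x. x + a) -` {x. phi x = \<beta>}" by (auto simp: block_def)
    also have "card \<dots> = card {x. phi x = \<beta>}"
      by (rule card_vimage_inj) (auto simp: inj_def intro: range_eqI[of _ _ "_ - a"])
    finally show ?thesis using levelK[OF that(1)] that(2) by simp
  qed
  have distinct: "a = a'" if "block phi a \<beta> = block phi a' \<beta>'" "\<beta> \<in> K" "\<beta> \<noteq> 0" for a a' \<beta> \<beta>'
  proof (rule ccontr)
    assume ne: "a \<noteq> a'"
    define e where "e = a' - a"
    have "e \<noteq> 0" using ne e_def by simp
    have "{x. phi x = \<beta>} \<subseteq> {u. phi (u + e) - phi u = \<beta>' - \<beta>}"
    proof
      fix s assume s: "s \<in> {x. phi x = \<beta>}"
      hence "s - a \<in> block phi a \<beta>" by (simp add: block_def)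
      hence "s - a \<in> block phi a' \<beta>'" using that(1) by simp
      hence "phi (s + e) = \<beta>'" by (simp add: block_def e_def algebra_simps)
      with s show "s \<in> {u. phi (u + e) - phi u = \<beta>' - \<beta>}" by simp
    qed
    hence "card {x. phi x = \<beta>} \<le> card {u. phi (u + e) - phi u = \<beta>' - \<beta>}" by (simp add: card_mono)
    also have "\<dots> \<le> q" using A[OF \<open>e \<noteq> 0\<close>] by blast
    finally show False using levelK[OF that(2)] that(3) by simp
  qed
  define BS where "BS = {block phi a \<beta> | a \<beta>. \<beta> \<in> K \<and> \<beta> \<noteq> 0}"
  have part1: "\<forall>B \<in> BS. card B = q + 1" using block_card by (auto simp: BS_def)
  have part2: "card {B \<in> BS. x \<in> B \<and> y \<in> B} = q" if "x \<noteq> y" for x y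
  proof -
    define d where "d = y - x"
    have "d \<noteq> 0" using that d_def by simp
    define Z where "Z = {u. phi (u + d) = phi u}"
    have nz: "phi u \<noteq> 0" if "u \<in> Z" for u
    proof
      assume z: "phi u = 0"
      hence "{u, u + d} \<subseteq> {x. phi x = 0}" using that by (auto simp: Z_def)
      hence "card {u, u + d} \<le> card {x. phi x = 0}" by (simp add: card_mono)
      also have "\<dots> = 1" using levelK[OF K0] by simp
      finally show False using \<open>d \<noteq> 0\<close> by simp
    qed
    have seteq: "{B \<in> BS. x \<in> B \<and> y \<in> B} = (\<lambda>u. block phi (u - x) (phi u)) ` Z"
    proof (rule equalityI)
      show "{B \<in> BS. x \<in> B \<and> y \<in> B} \<subseteq> (\<lambda>u. block phi (u - x) (phi u)) ` Z"
      proof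
        fix B assume "B \<in> {B \<in> BS. x \<in> B \<and> y \<in> B}"
        then obtain a \<beta> where B: "B = block phi a \<beta>" and xy: "phi (x + a) = \<beta>" "phi (y + a) = \<beta>"
          by (auto simp: BS_def block_def)
        have "x + a \<in> Z" using xy by (simp add: Z_def d_def algebra_simps)
        moreover have "B = block phi (x + a - x) (phi (x + a))" using B xy by simp
        ultimately show "B \<in> (\<lambda>u. block phi (u - x) (phi u)) ` Z" by blast
      qed
      show "(\<lambda>u. block phi (u - x) (phi u)) ` Z \<subseteq> {B \<in> BS. x \<in> B \<and> y \<in> B}"
      proof
        fix B assume "B \<in> (\<lambda>u. block phi (u - x) (phi u)) ` Z"
        then obtain u where u: "u \<in> Z" "B = block phi (u - x) (phi u)" by auto
        have "B \<in> BS" using u phiK nz[OF u(1)] by (auto simp: BS_def)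
        moreover have "x \<in> B" using u by (simp add: block_def)
        moreover have "y \<in> B" using u by (simp add: block_def Z_def d_def algebra_simps)
        ultimately show "B \<in> {B \<in> BS. x \<in> B \<and> y \<in> B}" by simp
      qed
    qed
    have "inj_on (\<lambda>u. block phi (u - x) (phi u)) Z"
    proof (rule inj_onI)
      fix u v assume "u \<in> Z" "v \<in> Z" "block phi (u - x) (phi u) = block phi (v - x) (phi v)"
      hence "u - x = v - x" using distinct phiK nz by blast
      thus "u = v" by simp
    qed
    hence "card {B \<in> BS. x \<in> B \<and> y \<in> B} = card Z" unfolding seteq by (rule card_image)
    also have "\<dots> = q" unfolding Z_def using A[OF \<open>d \<noteq> 0\<close>] by blast
    finally show ?thesis .
  qed
  show ?thesis unfolding phi_eq K_def[symmetric] using part1 part2 unfolding BS_def by blast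
qed

end
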